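(* Let $n\ge3$ and let $k\ne\mathbb{F}_2$ be a field. Let $S=k[x_{i,j}]_{1\le i<j\le 2n}$, setting $x_{j,i}:=x_{i,j}$ for $i<j$, and let $f=\sum_{M}a_M\prod_{\{i,j\}\in M}x_{i,j}$, the sum over all perfect matchings $M$ of $\{1,\dots,2n\}$, with all $a_M\in k^*$ (equivalently, $f$ is of the form $\sum_{\sigma\in S_{2n}}a_\sigma x_{\sigma(1),\sigma(2)}\cdots x_{\sigma(2n-1),\sigma(2n)}$ in which every such monomial has nonzero total coefficient). Then $f$ is not a direct sum.
   Context: A form $f$ in a polynomial ring over $k$ is a direct sum if, after an invertible linear change of the variables, it can be written as $f_1+f_2$ with $f_1,f_2$ nonzero forms in disjoint sets of the new variables. *)

theory Defs
  imports Main "HOL-Library.Poly_Mapping"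
begin

text \<open>Multivariate polynomials over a field 'a in variables of type 'v are
  represented as finitely supported maps from monomials (exponent vectors,
  of type 'v to nat) to coefficients; multiplication is convolution.\<close>

type_synonym ('v, 'a) mpoly = "('v \<Rightarrow>\<^sub>0 nat) \<Rightarrow>\<^sub>0 'a"

definition mvar :: "'v \<Rightarrow> ('v, 'a::comm_ring_1) mpoly" where
  "mvar v = Poly_Mapping.single (Poly_Mapping.single v 1) 1"

definition mconst_mono :: "'a::comm_ring_1 \<Rightarrow> ('v \<Rightarrow>\<^sub>0 nat) \<Rightarrow> ('v, 'a) mpoly" where
  "mconst_mono c m = Poly_Mapping.single m c"

definition vars :: "('v, 'a::zero) mpoly \<Rightarrow> 'v set" where
  "vars p = {v. \<exists>m\<in>Poly_Mapping.keys p. v \<in> Poly_Mapping.keys m}"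

definition mdeg :: "('v \<Rightarrow>\<^sub>0 nat) \<Rightarrow> nat" where
  "mdeg m = (\<Sum>v\<in>Poly_Mapping.keys m. Poly_Mapping.lookup m v)"

definition is_form :: "('v, 'a::zero) mpoly \<Rightarrow> bool" where
  "is_form p \<longleftrightarrow> (\<exists>d. \<forall>m\<in>Poly_Mapping.keys p. mdeg m = d)"

definition subst :: "('v \<Rightarrow> ('v, 'a::comm_ring_1) mpoly) \<Rightarrow> ('v, 'a) mpoly \<Rightarrow> ('v, 'a) mpoly" where
  "subst \<sigma> p = (\<Sum>m\<in>Poly_Mapping.keys p. mconst_mono (Poly_Mapping.lookup p m) 0 * (\<Prod>v\<in>Poly_Mapping.keys m. \<sigma> v ^ Poly_Mapping.lookup m v))"

definition lin_subst :: "'v set \<Rightarrow> ('v \<Rightarrow> 'v \<Rightarrow> 'a::comm_ring_1) \<Rightarrow> 'v \<Rightarrow> ('v, 'a) mpoly" where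
  "lin_subst V A v = (\<Sum>w\<in>V. mconst_mono (A v w) 0 * mvar w)"

definition invertible_on :: "'v set \<Rightarrow> ('v \<Rightarrow> 'v \<Rightarrow> 'a::comm_ring_1) \<Rightarrow> bool" where
  "invertible_on V A \<longleftrightarrow> (\<exists>B.
     (\<forall>u\<in>V. \<forall>w\<in>V. (\<Sum>v\<in>V. A u v * B v w) = (if u = w then 1 else 0)) \<and>
     (\<forall>u\<in>V. \<forall>w\<in>V. (\<Sum>v\<in>V. B u v * A v w) = (if u = w then 1 else 0)))"

definition direct_sum :: "'v set \<Rightarrow> ('v, 'a::field) mpoly \<Rightarrow> bool" where
  "direct_sum V f \<longleftrightarrow> (\<exists>A f1 f2 V1 V2.
     invertible_on V A \<and>
     subst (lin_subst V A) f = f1 + f2 \<and>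
     is_form f1 \<and> is_form f2 \<and> f1 \<noteq> 0 \<and> f2 \<noteq> 0 \<and>
     V1 \<subseteq> V \<and> V2 \<subseteq> V \<and> V1 \<inter> V2 = {} \<and> vars f1 \<subseteq> V1 \<and> vars f2 \<subseteq> V2)"

definition pvars :: "nat \<Rightarrow> (nat \<times> nat) set" where
  "pvars n = {(i, j). 1 \<le> i \<and> i < j \<and> j \<le> 2 * n}"

text \<open>Perfect matchings of {1..2n}, each edge {i,j} recorded as the pair (i,j) with i < j.\<close>
definition perfect_matchings :: "nat \<Rightarrow> (nat \<times> nat) set set" where
  "perfect_matchings n = {M. M \<subseteq> pvars n \<and>
     (\<forall>k\<in>{1..2*n}. \<exists>!e\<in>M. fst e = k \<or> snd e = k)}"

definition matching_monomial :: "(nat \<times> nat) set \<Rightarrow> (nat \<times> nat, 'a::comm_ring_1) mpoly" where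
  "matching_monomial M = (\<Prod>e\<in>M. mvar e)"

end

theory Submission
  imports Defs
begin


lemma C_def: "mconst_mono c 0 = Poly_Mapping.single 0 c"
  by (simp add: mconst_mono_def)

lemma C_add: "mconst_mono (a + b) 0 = mconst_mono a 0 + mconst_mono b 0"
  by (simp add: mconst_mono_def single_add)

lemma C_mult: "mconst_mono (a * b) 0 = mconst_mono a 0 * (mconst_mono b 0 :: ('v,'a::comm_ring_1) mpoly)"
  by (simp add: mconst_mono_def mult_single)

lemma C_0 [simp]: "mconst_mono 0 m = (0 :: ('v,'a::comm_ring_1) mpoly)"
  by (simp add: mconst_mono_def)

lemma C_1: "mconst_mono 1 0 = (1 :: ('v,'a::comm_ring_1) mpoly)"
  by (simp add: mconst_mono_def)

lemma C_sum: "mconst_mono (\<Sum>i\<in>I. f i) 0 = (\<Sum>i\<in>I. mconst_mono (f i) 0 :: ('v,'a::comm_ring_1) mpoly)"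
  by (induction I rule: infinite_finite_induct) (auto simp: C_add)

lemma poly_expand: "p = (\<Sum>m\<in>Poly_Mapping.keys p. Poly_Mapping.single m (Poly_Mapping.lookup p m))"
proof (rule poly_mapping_eqI)
  fix k
  have "Poly_Mapping.lookup (\<Sum>m\<in>Poly_Mapping.keys p. Poly_Mapping.single m (Poly_Mapping.lookup p m)) k
      = (\<Sum>m\<in>Poly_Mapping.keys p. (if m = k then Poly_Mapping.lookup p m else 0))"
    by (simp add: lookup_sum lookup_single when_def)
  also have "\<dots> = Poly_Mapping.lookup p k"
    by (simp add: sum.delta in_keys_iff)
  finally show "Poly_Mapping.lookup p k = Poly_Mapping.lookup (\<Sum>m\<in>Poly_Mapping.keys p. Poly_Mapping.single m (Poly_Mapping.lookup p m)) k" by simp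
qed

definition monev :: "('v \<Rightarrow> ('v, 'a::comm_ring_1) mpoly) \<Rightarrow> ('v \<Rightarrow>\<^sub>0 nat) \<Rightarrow> ('v, 'a) mpoly" where
  "monev \<sigma> m = (\<Prod>v\<in>Poly_Mapping.keys m. \<sigma> v ^ Poly_Mapping.lookup m v)"

lemma monev_superset:
  assumes "finite K" "Poly_Mapping.keys m \<subseteq> K"
  shows "monev \<sigma> m = (\<Prod>v\<in>K. \<sigma> v ^ Poly_Mapping.lookup m v)"
  unfolding monev_def
  by (rule prod.mono_neutral_left) (use assms in \<open>auto simp: in_keys_iff\<close>)

lemma monev_add: "monev \<sigma> (m + m') = monev \<sigma> m * monev \<sigma> m'"
proof -
  let ?K = "Poly_Mapping.keys m \<union> Poly_Mapping.keys m'"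
  have "monev \<sigma> (m + m') = (\<Prod>v\<in>?K. \<sigma> v ^ Poly_Mapping.lookup (m + m') v)"
    by (rule monev_superset) (auto dest: subsetD[OF keys_add])
  also have "\<dots> = (\<Prod>v\<in>?K. \<sigma> v ^ Poly_Mapping.lookup m v) * (\<Prod>v\<in>?K. \<sigma> v ^ Poly_Mapping.lookup m' v)"
    by (simp add: lookup_add power_add prod.distrib)
  also have "\<dots> = monev \<sigma> m * monev \<sigma> m'"
    using monev_superset[of ?K m \<sigma>] monev_superset[of ?K m' \<sigma>] by simp
  finally show ?thesis .
qed

lemma monev_0 [simp]: "monev \<sigma> 0 = 1"
  by (simp add: monev_def)

lemma monev_single1: "monev \<sigma> (Poly_Mapping.single v 1) = \<sigma> v"
  unfolding monev_def by simp

lemma subst_superset: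
  assumes "finite K" "Poly_Mapping.keys p \<subseteq> K"
  shows "subst \<sigma> p = (\<Sum>m\<in>K. mconst_mono (Poly_Mapping.lookup p m) 0 * monev \<sigma> m)"
  unfolding subst_def monev_def[symmetric]
  by (rule sum.mono_neutral_left) (use assms in \<open>auto simp: in_keys_iff\<close>)

lemma subst_add: "subst \<sigma> (p + q) = subst \<sigma> p + subst \<sigma> q"
proof -
  let ?K = "Poly_Mapping.keys p \<union> Poly_Mapping.keys q"
  have "subst \<sigma> (p + q) = (\<Sum>m\<in>?K. mconst_mono (Poly_Mapping.lookup (p+q) m) 0 * monev \<sigma> m)"
    by (rule subst_superset) (auto dest: subsetD[OF keys_add])
  also have "\<dots> = (\<Sum>m\<in>?K. mconst_mono (Poly_Mapping.lookup p m) 0 * monev \<sigma> m)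
       + (\<Sum>m\<in>?K. mconst_mono (Poly_Mapping.lookup q m) 0 * monev \<sigma> m)"
    by (simp add: lookup_add C_add distrib_right sum.distrib)
  also have "\<dots> = subst \<sigma> p + subst \<sigma> q"
    using subst_superset[of ?K p \<sigma>] subst_superset[of ?K q \<sigma>] by simp
  finally show ?thesis .
qed

lemma subst_zero [simp]: "subst \<sigma> 0 = 0"
  by (simp add: subst_def)

lemma subst_sum: "subst \<sigma> (\<Sum>i\<in>I. f i) = (\<Sum>i\<in>I. subst \<sigma> (f i))"
  by (induction I rule: infinite_finite_induct) (auto simp: subst_add)

lemma subst_single: "subst \<sigma> (Poly_Mapping.single m c) = mconst_mono c 0 * monev \<sigma> m"
  by (subst subst_superset[of "{m}"]) auto

lemma subst_mult: "subst \<sigma> (p * q) = subst \<sigma> p * subst \<sigma> q"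
proof -
  have "p * q = (\<Sum>m\<in>Poly_Mapping.keys p. Poly_Mapping.single m (Poly_Mapping.lookup p m))
      * (\<Sum>m\<in>Poly_Mapping.keys q. Poly_Mapping.single m (Poly_Mapping.lookup q m))"
    by (simp flip: poly_expand)
  also have "\<dots> = (\<Sum>m\<in>Poly_Mapping.keys p. \<Sum>m'\<in>Poly_Mapping.keys q.
       Poly_Mapping.single (m + m') (Poly_Mapping.lookup p m * Poly_Mapping.lookup q m'))"
    by (simp add: sum_product mult_single)
  finally have "subst \<sigma> (p * q) = (\<Sum>m\<in>Poly_Mapping.keys p. \<Sum>m'\<in>Poly_Mapping.keys q.
       (mconst_mono (Poly_Mapping.lookup p m) 0 * monev \<sigma> m) * (mconst_mono (Poly_Mapping.lookup q m') 0 * monev \<sigma> m'))"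
    by (simp add: subst_sum subst_single monev_add C_mult mult_ac)
  also have "\<dots> = subst \<sigma> p * subst \<sigma> q"
    by (simp add: subst_def monev_def sum_product)
  finally show ?thesis .
qed

lemma subst_C [simp]: "subst \<sigma> (mconst_mono c 0) = mconst_mono c 0"
  by (simp add: C_def subst_single)

lemma subst_mvar [simp]: "subst \<sigma> (mvar v) = \<sigma> v"
  unfolding mvar_def subst_single monev_single1 C_1 by simp

lemma subst_one [simp]: "subst \<sigma> 1 = 1"
proof -
  have "subst \<sigma> (Poly_Mapping.single 0 1) = 1"
    unfolding subst_single monev_0 C_1 by simp
  then show ?thesis by simp
qed

lemma subst_prod: "subst \<sigma> (\<Prod>i\<in>I. f i) = (\<Prod>i\<in>I. subst \<sigma> (f i))"
  by (induction I rule: infinite_finite_induct) (auto simp: subst_mult)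



definition deriv :: "'v \<Rightarrow> ('v, 'a::comm_ring_1) mpoly \<Rightarrow> ('v, 'a) mpoly" where
  "deriv v p = (\<Sum>m\<in>Poly_Mapping.keys p. Poly_Mapping.single (m - Poly_Mapping.single v 1)
      (Poly_Mapping.lookup p m * of_nat (Poly_Mapping.lookup m v)))"

lemma deriv_superset:
  assumes "finite K" "Poly_Mapping.keys p \<subseteq> K"
  shows "deriv v p = (\<Sum>m\<in>K. Poly_Mapping.single (m - Poly_Mapping.single v 1)
      (Poly_Mapping.lookup p m * of_nat (Poly_Mapping.lookup m v)))"
  unfolding deriv_def
  by (rule sum.mono_neutral_left) (use assms in \<open>auto simp: in_keys_iff\<close>)

lemma deriv_add: "deriv v (p + q) = deriv v p + deriv v q"
proof -
  let ?K = "Poly_Mapping.keys p \<union> Poly_Mapping.keys q"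
  let ?F = "\<lambda>r. (\<Sum>m\<in>?K. Poly_Mapping.single (m - Poly_Mapping.single v 1)
      (Poly_Mapping.lookup r m * of_nat (Poly_Mapping.lookup m v)))"
  have "deriv v (p + q) = ?F (p + q)"
    by (rule deriv_superset) (auto dest: subsetD[OF keys_add])
  also have "\<dots> = ?F p + ?F q"
    by (simp add: lookup_add distrib_right single_add sum.distrib)
  also have "\<dots> = deriv v p + deriv v q"
    using deriv_superset[of ?K p v] deriv_superset[of ?K q v] by simp
  finally show ?thesis .
qed

lemma deriv_zero [simp]: "deriv v 0 = 0"
  by (simp add: deriv_def)

lemma deriv_sum: "deriv v (\<Sum>i\<in>I. f i) = (\<Sum>i\<in>I. deriv v (f i))"
  by (induction I rule: infinite_finite_induct) (auto simp: deriv_add)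

lemma deriv_single: "deriv v (Poly_Mapping.single m c) =
   Poly_Mapping.single (m - Poly_Mapping.single v 1) (c * of_nat (Poly_Mapping.lookup m v))"
  by (subst deriv_superset[of "{m}"]) auto

lemma deriv_single_mult:
  "deriv v (Poly_Mapping.single m a * Poly_Mapping.single m' b) =
   deriv v (Poly_Mapping.single m a) * Poly_Mapping.single m' b
   + Poly_Mapping.single m a * deriv v (Poly_Mapping.single m' b)"
proof -
  let ?d = "Poly_Mapping.single v (1::nat)"
  let ?X = "m + m' - ?d"
  have e1: "Poly_Mapping.single (m - ?d + m') (a * of_nat (Poly_Mapping.lookup m v) * b)
      = Poly_Mapping.single ?X (a * of_nat (Poly_Mapping.lookup m v) * b)"
  proof (cases "Poly_Mapping.lookup m v = 0")
    case False
    then have "m - ?d + m' = ?X"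
      by (intro poly_mapping_eqI) (auto simp: lookup_add lookup_minus lookup_single when_def)
    then show ?thesis by simp
  qed simp
  have e2: "Poly_Mapping.single (m + (m' - ?d)) (a * (b * of_nat (Poly_Mapping.lookup m' v)))
      = Poly_Mapping.single ?X (a * (b * of_nat (Poly_Mapping.lookup m' v)))"
  proof (cases "Poly_Mapping.lookup m' v = 0")
    case False
    then have "m + (m' - ?d) = ?X"
      by (intro poly_mapping_eqI) (auto simp: lookup_add lookup_minus lookup_single when_def)
    then show ?thesis by simp
  qed simp
  have L: "deriv v (Poly_Mapping.single m a * Poly_Mapping.single m' b)
      = Poly_Mapping.single ?X (a * b * of_nat (Poly_Mapping.lookup m v + Poly_Mapping.lookup m' v))"
    unfolding mult_single deriv_single lookup_add ..
  have R1: "deriv v (Poly_Mapping.single m a) * Poly_Mapping.single m' b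
      = Poly_Mapping.single ?X (a * of_nat (Poly_Mapping.lookup m v) * b)"
    unfolding mult_single deriv_single e1 ..
  have R2: "Poly_Mapping.single m a * deriv v (Poly_Mapping.single m' b)
      = Poly_Mapping.single ?X (a * (b * of_nat (Poly_Mapping.lookup m' v)))"
    unfolding mult_single deriv_single e2 ..
  show ?thesis
    unfolding L R1 R2 single_add[symmetric] by (simp add: algebra_simps)
qed

lemma deriv_mult: "deriv v (p * q) = deriv v p * q + p * deriv v q"
proof -
  let ?s = "\<lambda>r m. Poly_Mapping.single m (Poly_Mapping.lookup r m)"
  have dp: "deriv v r = (\<Sum>m\<in>Poly_Mapping.keys r. deriv v (?s r m))" for r :: "('a, 'b) mpoly"
    by (subst poly_expand[of r]) (simp add: deriv_sum)
  have "p * q = (\<Sum>m\<in>Poly_Mapping.keys p. \<Sum>m'\<in>Poly_Mapping.keys q. ?s p m * ?s q m')"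
    by (subst poly_expand[of p], subst poly_expand[of q]) (simp add: sum_product)
  then have "deriv v (p * q) = (\<Sum>m\<in>Poly_Mapping.keys p. \<Sum>m'\<in>Poly_Mapping.keys q.
        deriv v (?s p m) * ?s q m' + ?s p m * deriv v (?s q m'))"
    by (simp add: deriv_sum deriv_single_mult)
  also have "\<dots> = (\<Sum>m\<in>Poly_Mapping.keys p. deriv v (?s p m)) * (\<Sum>m'\<in>Poly_Mapping.keys q. ?s q m')
      + (\<Sum>m\<in>Poly_Mapping.keys p. ?s p m) * (\<Sum>m'\<in>Poly_Mapping.keys q. deriv v (?s q m'))"
    by (simp add: sum_product sum.distrib)
  also have "\<dots> = deriv v p * q + p * deriv v q"
    by (simp only: dp[symmetric] poly_expand[symmetric])
  finally show ?thesis .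
qed

lemma deriv_C [simp]: "deriv v (mconst_mono c 0) = 0"
  by (simp add: C_def deriv_single)

lemma deriv_one [simp]: "deriv v 1 = 0"
  using deriv_C[of v 1] by (simp add: C_1)

lemma deriv_mvar: "deriv v (mvar w) = mconst_mono (if w = v then 1 else 0) 0"
  by (simp add: mvar_def deriv_single C_def lookup_single when_def)

lemma deriv_Cmult: "deriv v (mconst_mono c 0 * p) = mconst_mono c 0 * deriv v p"
  by (simp add: deriv_mult)

lemma deriv_prod:
  assumes "finite S"
  shows "deriv v (\<Prod>e\<in>S. L e) = (\<Sum>e\<in>S. deriv v (L e) * (\<Prod>e'\<in>S - {e}. L e'))"
  using assms
proof (induction S rule: finite_induct)
  case (insert x F)
  have p: "(\<Prod>e\<in>insert x F. L e) = L x * (\<Prod>e\<in>F. L e)"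
    using insert(1,2) by (rule prod.insert)
  have x: "insert x F - {x} = F" using insert(2) by auto
  have c: "deriv v (L e) * (L x * (\<Prod>e'\<in>F - {e}. L e')) = deriv v (L e) * (\<Prod>e'\<in>insert x F - {e}. L e')"
    if "e \<in> F" for e
  proof -
    have "insert x F - {e} = insert x (F - {e})" using insert(2) that by auto
    moreover have "x \<notin> F - {e}" using insert(2) by auto
    moreover have "finite (F - {e})" using insert(1) by auto
    ultimately show ?thesis by simp
  qed
  have "deriv v (\<Prod>e\<in>insert x F. L e) = deriv v (L x) * (\<Prod>e\<in>F. L e) + L x * deriv v (\<Prod>e\<in>F. L e)"
    unfolding p deriv_mult ..
  also have "\<dots> = deriv v (L x) * (\<Prod>e\<in>F. L e) + (\<Sum>e\<in>F. deriv v (L e) * (L x * (\<Prod>e'\<in>F - {e}. L e')))"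
    unfolding insert(3) sum_distrib_left by (rule arg_cong[where f="\<lambda>t. _ + t"], rule sum.cong, simp_all add: ac_simps)
  also have "\<dots> = deriv v (L x) * (\<Prod>e'\<in>insert x F - {x}. L e') + (\<Sum>e\<in>F. deriv v (L e) * (\<Prod>e'\<in>insert x F - {e}. L e'))"
    using c unfolding x by (metis (no_types, lifting) sum.cong)
  also have "\<dots> = (\<Sum>e\<in>insert x F. deriv v (L e) * (\<Prod>e'\<in>insert x F - {e}. L e'))"
    by (rule sum.insert[symmetric]) (use insert in auto)
  finally show ?case .
qed simp

lemma keys_minus_single: "Poly_Mapping.keys (m - Poly_Mapping.single v (1::nat)) \<subseteq> Poly_Mapping.keys m"
  by (auto simp: in_keys_iff lookup_minus)

lemma vars_deriv: "vars (deriv w p) \<subseteq> vars p"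
proof
  fix x assume "x \<in> vars (deriv w p)"
  then obtain m where m: "m \<in> Poly_Mapping.keys (deriv w p)" "x \<in> Poly_Mapping.keys m"
    by (auto simp: vars_def)
  have "Poly_Mapping.keys (deriv w p) \<subseteq> (\<Union>m0\<in>Poly_Mapping.keys p. Poly_Mapping.keys (Poly_Mapping.single (m0 - Poly_Mapping.single w 1)
      (Poly_Mapping.lookup p m0 * of_nat (Poly_Mapping.lookup m0 w))))"
    unfolding deriv_def by (rule keys_sum)
  with m(1) obtain m0 where "m0 \<in> Poly_Mapping.keys p" "m \<in> Poly_Mapping.keys (Poly_Mapping.single (m0 - Poly_Mapping.single w 1)
      (Poly_Mapping.lookup p m0 * of_nat (Poly_Mapping.lookup m0 w)))"
    by blast
  then have "m0 \<in> Poly_Mapping.keys p" "m = m0 - Poly_Mapping.single w 1"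
    by (auto split: if_splits)
  with m(2) keys_minus_single[of m0 w] show "x \<in> vars p" by (auto simp: vars_def)
qed

lemma deriv_notvar:
  assumes "v \<notin> vars p" shows "deriv v p = 0"
  unfolding deriv_def
proof (rule sum.neutral, rule ballI)
  fix m assume "m \<in> Poly_Mapping.keys p"
  then have "v \<notin> Poly_Mapping.keys m" using assms by (auto simp: vars_def)
  then have "Poly_Mapping.lookup m v = 0" by (simp add: in_keys_iff)
  then show "Poly_Mapping.single (m - Poly_Mapping.single v 1) (Poly_Mapping.lookup p m * of_nat (Poly_Mapping.lookup m v)) = 0"
    by simp
qed



definition mon :: "'v set \<Rightarrow> ('v \<Rightarrow>\<^sub>0 nat)" where
  "mon S = (\<Sum>e\<in>S. Poly_Mapping.single e 1)"

lemma lookup_mon: "finite S \<Longrightarrow> Poly_Mapping.lookup (mon S) e = (if e \<in> S then 1 else 0)"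
  by (simp add: mon_def lookup_sum lookup_single when_def)

lemma mon_inj: "finite S \<Longrightarrow> finite N \<Longrightarrow> mon S = mon N \<Longrightarrow> S = N"
  by (metis lookup_mon one_neq_zero subsetI subset_antisym)

lemma mm_single: "finite S \<Longrightarrow> matching_monomial S = (Poly_Mapping.single (mon S) 1 :: (nat \<times> nat, 'a::comm_ring_1) mpoly)"
proof (induction S rule: finite_induct)
  case empty then show ?case by (simp add: matching_monomial_def mon_def)
next
  case (insert x F)
  then show ?case
    by (simp add: matching_monomial_def mon_def mvar_def mult_single)
qed

lemma C_single: "mconst_mono c 0 * Poly_Mapping.single m d = Poly_Mapping.single m (c * d)"
  by (simp add: C_def mult_single)

lemma subst_mm: "subst \<sigma> (matching_monomial M) = (\<Prod>e\<in>M. \<sigma> e)"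
  by (simp add: matching_monomial_def subst_prod)

lemma lin_subst_subst:
  assumes "finite V" "e \<in> V"
    and AB: "\<forall>u\<in>V. \<forall>w\<in>V. (\<Sum>v\<in>V. A u v * B v w) = (if u = w then 1 else 0)"
  shows "subst (lin_subst V B) (lin_subst V A e) = mvar e"
proof -
  have "subst (lin_subst V B) (lin_subst V A e) =
      (\<Sum>w\<in>V. mconst_mono (A e w) 0 * (\<Sum>z\<in>V. mconst_mono (B w z) 0 * mvar z))"
    by (simp add: lin_subst_def subst_sum subst_mult)
  also have "\<dots> = (\<Sum>w\<in>V. \<Sum>z\<in>V. mconst_mono (A e w * B w z) 0 * mvar z)"
    by (simp add: sum_distrib_left C_mult mult.assoc)
  also have "\<dots> = (\<Sum>z\<in>V. \<Sum>w\<in>V. mconst_mono (A e w * B w z) 0 * mvar z)"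
    by (rule sum.swap)
  also have "\<dots> = (\<Sum>z\<in>V. mconst_mono (\<Sum>w\<in>V. A e w * B w z) 0 * mvar z)"
    by (simp add: C_sum sum_distrib_right)
  also have "\<dots> = (\<Sum>z\<in>V. mconst_mono (if e = z then 1 else 0) 0 * mvar z)"
    using AB assms(2) by (intro sum.cong) auto
  also have "\<dots> = (\<Sum>z\<in>V. if e = z then mvar z else 0)"
    by (intro sum.cong) (auto simp: C_1)
  also have "\<dots> = mvar e"
    using assms by simp
  finally show ?thesis .
qed

lemma deriv_lin_subst:
  assumes "finite V" "w \<in> V"
  shows "deriv w (lin_subst V A e) = mconst_mono (A e w) 0"
proof -
  have "deriv w (lin_subst V A e) = (\<Sum>z\<in>V. mconst_mono (A e z) 0 * mconst_mono (if z = w then 1 else 0) 0)"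
    by (simp add: lin_subst_def deriv_sum deriv_Cmult deriv_mvar)
  also have "\<dots> = (\<Sum>z\<in>V. if z = w then mconst_mono (A e z) 0 else 0)"
    by (intro sum.cong) (auto simp: C_1)
  also have "\<dots> = mconst_mono (A e w) 0"
    using assms by simp
  finally show ?thesis .
qed



lemma Y_formula:
  fixes P :: "(nat \<times> nat) set set" and a :: "(nat \<times> nat) set \<Rightarrow> 'k::field"
  assumes V: "finite V" and PV: "\<forall>M\<in>P. M \<subseteq> V" and uV: "u \<in> V" and wV: "w \<in> V"
    and AB: "\<forall>u\<in>V. \<forall>w\<in>V. (\<Sum>v\<in>V. A u v * B v w) = (if u = w then 1 else 0)"
  shows "subst (lin_subst V B) (deriv u (deriv w (subst (lin_subst V A)
            (\<Sum>M\<in>P. mconst_mono (a M) 0 * matching_monomial M))))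
       = (\<Sum>M\<in>P. \<Sum>e\<in>M. \<Sum>e'\<in>M - {e}.
            Poly_Mapping.single (mon (M - {e} - {e'})) (a M * A e w * A e' u))"
proof -
  let ?\<sigma> = "lin_subst V A" and ?\<tau> = "lin_subst V B"
  have fin: "finite M" if "M \<in> P" for M using that PV V finite_subset by blast
  have d: "deriv u (deriv w (\<Prod>e\<in>M. ?\<sigma> e)) = (\<Sum>e\<in>M. mconst_mono (A e w) 0 *
        (\<Sum>e'\<in>M - {e}. mconst_mono (A e' u) 0 * (\<Prod>e''\<in>M - {e} - {e'}. ?\<sigma> e'')))"
    if "M \<in> P" for M
  proof -
    have MV: "M \<subseteq> V" using that PV by blast
    have "deriv w (\<Prod>e\<in>M. ?\<sigma> e) = (\<Sum>e\<in>M. mconst_mono (A e w) 0 * (\<Prod>e'\<in>M - {e}. ?\<sigma> e'))"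
      using fin[OF that] by (simp add: deriv_prod deriv_lin_subst V wV)
    moreover have "deriv u (\<Prod>e'\<in>M - {e}. ?\<sigma> e') = (\<Sum>e'\<in>M - {e}. mconst_mono (A e' u) 0 * (\<Prod>e''\<in>M - {e} - {e'}. ?\<sigma> e''))" for e
      using fin[OF that] by (simp add: deriv_prod deriv_lin_subst V uV)
    ultimately show ?thesis by (simp add: deriv_sum deriv_Cmult)
  qed
  have s: "subst ?\<tau> (\<Prod>e''\<in>S. ?\<sigma> e'') = Poly_Mapping.single (mon S) 1" if "S \<subseteq> V" for S
  proof -
    have "finite S" using that V finite_subset by blast
    have "subst ?\<tau> (\<Prod>e''\<in>S. ?\<sigma> e'') = (\<Prod>e''\<in>S. mvar e'')"
      unfolding subst_prod using that by (intro prod.cong) (auto intro!: lin_subst_subst V AB)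
    also have "\<dots> = Poly_Mapping.single (mon S) 1"
      using mm_single[OF \<open>finite S\<close>] by (simp add: matching_monomial_def)
    finally show ?thesis .
  qed
  have s': "subst ?\<tau> (\<Prod>e''\<in>M - {e} - {e'}. ?\<sigma> e'') = Poly_Mapping.single (mon (M - {e} - {e'})) 1"
    if "M \<in> P" for M e e'
    using s[of "M - {e} - {e'}"] PV that by blast
  have "subst ?\<sigma> (\<Sum>M\<in>P. mconst_mono (a M) 0 * matching_monomial M) = (\<Sum>M\<in>P. mconst_mono (a M) 0 * (\<Prod>e\<in>M. ?\<sigma> e))"
    by (simp add: subst_sum subst_mult subst_mm)
  then have "deriv u (deriv w (subst ?\<sigma> (\<Sum>M\<in>P. mconst_mono (a M) 0 * matching_monomial M)))
     = (\<Sum>M\<in>P. mconst_mono (a M) 0 * (\<Sum>e\<in>M. mconst_mono (A e w) 0 *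
        (\<Sum>e'\<in>M - {e}. mconst_mono (A e' u) 0 * (\<Prod>e''\<in>M - {e} - {e'}. ?\<sigma> e''))))"
    by (simp add: deriv_sum deriv_Cmult d)
  then have "subst ?\<tau> (deriv u (deriv w (subst ?\<sigma> (\<Sum>M\<in>P. mconst_mono (a M) 0 * matching_monomial M))))
     = (\<Sum>M\<in>P. mconst_mono (a M) 0 * (\<Sum>e\<in>M. mconst_mono (A e w) 0 *
        (\<Sum>e'\<in>M - {e}. mconst_mono (A e' u) 0 * Poly_Mapping.single (mon (M - {e} - {e'})) 1)))"
    using PV by (auto simp: subst_sum subst_mult s' intro!: sum.cong)
  also have "\<dots> = (\<Sum>M\<in>P. \<Sum>e\<in>M. \<Sum>e'\<in>M - {e}.
            Poly_Mapping.single (mon (M - {e} - {e'})) (a M * A e w * A e' u))"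
    by (simp add: sum_distrib_left C_single mult.assoc)
  finally show ?thesis .
qed

lemma reindex3:
  assumes "finite P" "finite V" "\<forall>M\<in>P. M \<subseteq> V"
  shows "(\<Sum>M\<in>P. \<Sum>e\<in>M. \<Sum>e'\<in>M - {e}. (if M - {e} - {e'} = N then F M e e' else (0::'a::comm_monoid_add)))
       = (\<Sum>e\<in>V. \<Sum>e'\<in>V. (if e \<noteq> e' \<and> e \<notin> N \<and> e' \<notin> N \<and> insert e (insert e' N) \<in> P
              then F (insert e (insert e' N)) e e' else 0))"
proof -
  have s1: "(\<Sum>e\<in>M. \<Sum>e'\<in>M - {e}. G e e') = (\<Sum>e\<in>V. \<Sum>e'\<in>V. if e \<in> M \<and> e' \<in> M \<and> e' \<noteq> e then G e e' else 0)"
    if "M \<subseteq> V" for M and G :: "_ \<Rightarrow> _ \<Rightarrow> 'a"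
  proof -
    have "(\<Sum>e\<in>M. \<Sum>e'\<in>M - {e}. G e e') = (\<Sum>e\<in>V \<inter> M. \<Sum>e'\<in>V \<inter> (M - {e}). G e e')"
      using that by (intro sum.cong) auto
    also have "\<dots> = (\<Sum>e\<in>V. if e \<in> M then (\<Sum>e'\<in>V. if e' \<in> M \<and> e' \<noteq> e then G e e' else 0) else 0)"
      using assms(2) by (simp add: sum.inter_restrict)
    also have "\<dots> = (\<Sum>e\<in>V. \<Sum>e'\<in>V. if e \<in> M \<and> e' \<in> M \<and> e' \<noteq> e then G e e' else 0)"
      by (intro sum.cong) auto
    finally show ?thesis .
  qed
  have "(\<Sum>M\<in>P. \<Sum>e\<in>M. \<Sum>e'\<in>M - {e}. (if M - {e} - {e'} = N then F M e e' else 0))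
     = (\<Sum>M\<in>P. \<Sum>e\<in>V. \<Sum>e'\<in>V. if e \<in> M \<and> e' \<in> M \<and> e' \<noteq> e then (if M - {e} - {e'} = N then F M e e' else 0) else 0)"
    by (rule sum.cong[OF refl], rule s1) (use assms(3) in auto)
  also have "\<dots> = (\<Sum>e\<in>V. \<Sum>M\<in>P. \<Sum>e'\<in>V. if e \<in> M \<and> e' \<in> M \<and> e' \<noteq> e then (if M - {e} - {e'} = N then F M e e' else 0) else 0)"
    by (rule sum.swap)
  also have "\<dots> = (\<Sum>e\<in>V. \<Sum>e'\<in>V. \<Sum>M\<in>P. if e \<in> M \<and> e' \<in> M \<and> e' \<noteq> e then (if M - {e} - {e'} = N then F M e e' else 0) else 0)"
    by (intro sum.cong refl sum.swap)
  also have "\<dots> = (\<Sum>e\<in>V. \<Sum>e'\<in>V. (if e \<noteq> e' \<and> e \<notin> N \<and> e' \<notin> N \<and> insert e (insert e' N) \<in> P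
              then F (insert e (insert e' N)) e e' else 0))"
  proof (intro sum.cong refl)
    fix e e'
    let ?X = "insert e (insert e' N)"
    have "(\<Sum>M\<in>P. if e \<in> M \<and> e' \<in> M \<and> e' \<noteq> e then (if M - {e} - {e'} = N then F M e e' else 0) else 0)
        = (\<Sum>M\<in>P. if M = ?X then (if e \<noteq> e' \<and> e \<notin> N \<and> e' \<notin> N then F ?X e e' else 0) else 0)"
    proof (intro sum.cong refl)
      fix M
      have "(e \<in> M \<and> e' \<in> M \<and> e' \<noteq> e \<and> M - {e} - {e'} = N) \<longleftrightarrow> (M = ?X \<and> e \<noteq> e' \<and> e \<notin> N \<and> e' \<notin> N)"
        by blast
      then show "(if e \<in> M \<and> e' \<in> M \<and> e' \<noteq> e then (if M - {e} - {e'} = N then F M e e' else 0) else 0)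
          = (if M = ?X then (if e \<noteq> e' \<and> e \<notin> N \<and> e' \<notin> N then F ?X e e' else 0) else 0)"
        by (smt (verit))
    qed
    also have "\<dots> = (if e \<noteq> e' \<and> e \<notin> N \<and> e' \<notin> N \<and> ?X \<in> P then F ?X e e' else 0)"
      using assms(1) by (simp add: sum.delta')
    finally show "(\<Sum>M\<in>P. if e \<in> M \<and> e' \<in> M \<and> e' \<noteq> e then (if M - {e} - {e'} = N then F M e e' else 0) else 0)
        = (if e \<noteq> e' \<and> e \<notin> N \<and> e' \<notin> N \<and> ?X \<in> P then F ?X e e' else 0)" .
  qed
  finally show ?thesis .
qed



definition cov :: "nat \<times> nat \<Rightarrow> nat \<Rightarrow> bool" where
  "cov e k \<longleftrightarrow> fst e = k \<or> snd e = k"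

lemma PM_sub: "X \<in> perfect_matchings n \<Longrightarrow> e \<in> X \<Longrightarrow> 1 \<le> fst e \<and> fst e < snd e \<and> snd e \<le> 2 * n"
  unfolding perfect_matchings_def pvars_def by (cases e) auto

lemma PM_ex1: "X \<in> perfect_matchings n \<Longrightarrow> 1 \<le> k \<Longrightarrow> k \<le> 2 * n \<Longrightarrow> \<exists>!e. e \<in> X \<and> cov e k"
proof -
  assume a: "X \<in> perfect_matchings n" "1 \<le> k" "k \<le> 2 * n"
  from a(1) have "\<forall>k\<in>{1..2*n}. \<exists>!e. e \<in> X \<and> (fst e = k \<or> snd e = k)"
    by (simp add: perfect_matchings_def)
  then have "\<exists>!e. e \<in> X \<and> (fst e = k \<or> snd e = k)" using a(2,3) by simp
  then show ?thesis unfolding cov_def .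
qed
lemma PM_exists: "X \<in> perfect_matchings n \<Longrightarrow> 1 \<le> k \<Longrightarrow> k \<le> 2 * n \<Longrightarrow> \<exists>e\<in>X. cov e k"
  using PM_ex1 by blast
lemma PM_unique: "X \<in> perfect_matchings n \<Longrightarrow> e1 \<in> X \<Longrightarrow> e2 \<in> X \<Longrightarrow> cov e1 k \<Longrightarrow> cov e2 k
   \<Longrightarrow> 1 \<le> k \<Longrightarrow> k \<le> 2 * n \<Longrightarrow> e1 = e2"
  using PM_ex1 by blast
lemma pair_eq: "fst g < snd g \<Longrightarrow> fst g' < snd g' \<Longrightarrow> cov g' (fst g) \<Longrightarrow> cov g' (snd g) \<Longrightarrow> g = g'"
  unfolding cov_def by (cases g, cases g') auto

lemma K1:
  assumes X: "insert g (insert h N) \<in> perfect_matchings n" and "g \<notin> N" "g \<noteq> h"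
    and Y: "insert g' (insert h N) \<in> perfect_matchings n"
  shows "g = g'"
proof -
  have gr: "1 \<le> fst g \<and> fst g < snd g \<and> snd g \<le> 2 * n" using PM_sub[OF X] by auto
  have g'r: "fst g' < snd g'" using PM_sub[OF Y] by auto
  have "cov g' k" if kk: "cov g k" "1 \<le> k" "k \<le> 2 * n" for k
  proof -
    obtain e where e: "e \<in> insert g' (insert h N)" "cov e k" using PM_exists[OF Y kk(2,3)] by blast
    show ?thesis
    proof (cases "e = g'")
      case False
      then have "e \<in> insert g (insert h N)" using e(1) by auto
      then have "e = g" using PM_unique[OF X _ _ e(2) kk(1) kk(2,3)] by auto
      then show ?thesis using False e(1) assms(2,3) by auto
    qed (use e in auto)
  qed
  then have "cov g' (fst g)" "cov g' (snd g)" using gr by (auto simp: cov_def)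
  then show ?thesis using pair_eq gr g'r by blast
qed

lemma K2:
  assumes X: "insert g (insert h N) \<in> perfect_matchings n"
    and Y: "insert g' (insert e N) \<in> perfect_matchings n" and "e \<notin> N"
    and k: "cov e k"
  shows "cov g k \<or> cov h k"
proof -
  have er: "1 \<le> fst e \<and> fst e < snd e \<and> snd e \<le> 2 * n" using PM_sub[OF Y] by auto
  then have kr: "1 \<le> k" "k \<le> 2 * n" using k by (auto simp: cov_def)
  obtain e0 where e0: "e0 \<in> insert g (insert h N)" "cov e0 k" using PM_exists[OF X kr] by blast
  show ?thesis
  proof (cases "e0 \<in> N")
    case True
    then have "e0 = e" using PM_unique[OF Y _ _ e0(2) k kr] by auto
    then show ?thesis using True assms(3) by auto
  next
    case False
    then show ?thesis using e0 by auto
  qed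
qed

lemma pm_exists:
  "finite W \<Longrightarrow> W \<subseteq> {1..2*n} \<Longrightarrow> even (card W) \<Longrightarrow>
   \<exists>N. N \<subseteq> pvars n \<and> (\<forall>k\<in>W. \<exists>e\<in>N. cov e k) \<and> (\<forall>k\<in>W. \<forall>e1\<in>N. \<forall>e2\<in>N. cov e1 k \<longrightarrow> cov e2 k \<longrightarrow> e1 = e2)
      \<and> (\<forall>e\<in>N. fst e \<in> W \<and> snd e \<in> W)"
proof (induction "card W" arbitrary: W rule: less_induct)
  case less
  show ?case
  proof (cases "W = {}")
    case True then show ?thesis by (intro exI[of _ "{}"]) auto
  next
    case False
    define i where "i = Min W"
    have iW: "i \<in> W" using False less.prems(1) by (simp add: i_def)
    have "card W \<noteq> 1" using less.prems(3) by auto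
    moreover have "card W > 0" using False less.prems(1) by auto
    ultimately have cW2: "card W \<ge> 2" by linarith
    have "card (W - {i}) = card W - 1" using iW less.prems(1) by simp
    then have "card (W - {i}) \<noteq> 0" using cW2 by simp
    then have "W - {i} \<noteq> {}" by (metis card.empty)
    define j where "j = Min (W - {i})"
    have jW: "j \<in> W - {i}" unfolding j_def using \<open>W - {i} \<noteq> {}\<close> less.prems(1) by (intro Min_in) auto
    have "i \<le> j" using jW less.prems(1) unfolding i_def by simp
    then have ij: "i < j" using jW by auto
    define W' where "W' = W - {i, j}"
    have "card {i, j} = 2" using ij by simp
    then have cW': "card W' = card W - 2" using iW jW less.prems(1) unfolding W'_def
      by (subst card_Diff_subset) auto
    have "card W \<ge> 2" by (fact cW2)
    then have lt: "card W' < card W" and ev': "even (card W')" using cW' less.prems(3) by auto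
    have fW': "finite W'" "W' \<subseteq> {1..2*n}" using less.prems(1,2) unfolding W'_def by auto
    obtain N where N: "N \<subseteq> pvars n" "\<forall>k\<in>W'. \<exists>e\<in>N. cov e k"
      "\<forall>k\<in>W'. \<forall>e1\<in>N. \<forall>e2\<in>N. cov e1 k \<longrightarrow> cov e2 k \<longrightarrow> e1 = e2" "\<forall>e\<in>N. fst e \<in> W' \<and> snd e \<in> W'"
      using less.hyps[OF lt fW' ev'] by blast
    have ijp: "(i, j) \<in> pvars n" using iW jW ij less.prems(2) by (auto simp: pvars_def)
    show ?thesis
    proof (intro exI[of _ "insert (i, j) N"] conjI ballI impI)
      show "insert (i, j) N \<subseteq> pvars n" using N(1) ijp by auto
    next
      fix k assume "k \<in> W"
      then show "\<exists>e\<in>insert (i, j) N. cov e k"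
        using N(2) unfolding W'_def by (cases "k = i \<or> k = j") (auto simp: cov_def)
    next
      fix k e1 e2 assume "k \<in> W" "e1 \<in> insert (i, j) N" "e2 \<in> insert (i, j) N" "cov e1 k" "cov e2 k"
      then show "e1 = e2"
        using N(3,4) unfolding W'_def cov_def by (cases "k = i \<or> k = j") auto
    next
      fix e assume "e \<in> insert (i, j) N"
      then show "fst e \<in> W" "snd e \<in> W" using N(4) iW jW unfolding W'_def by auto
    qed
  qed
qed

lemma extend:
  assumes "g \<in> pvars n" "h \<in> pvars n" "{fst g, snd g} \<inter> {fst h, snd h} = {}"
  shows "\<exists>N. g \<notin> N \<and> h \<notin> N \<and> insert g (insert h N) \<in> perfect_matchings n"
proof -
  define W where "W = {1..2*n} - {fst g, snd g, fst h, snd h}"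
  have sub: "{fst g, snd g, fst h, snd h} \<subseteq> {1..2*n}" using assms(1,2) by (auto simp: pvars_def)
  have c4: "card {fst g, snd g, fst h, snd h} = 4" using assms by (auto simp: pvars_def)
  have "card W = 2 * n - 4" unfolding W_def using sub c4 by (simp add: card_Diff_subset)
  then have ev: "even (card W)" by auto
  obtain N where N: "N \<subseteq> pvars n" "\<forall>k\<in>W. \<exists>e\<in>N. cov e k"
      "\<forall>k\<in>W. \<forall>e1\<in>N. \<forall>e2\<in>N. cov e1 k \<longrightarrow> cov e2 k \<longrightarrow> e1 = e2" "\<forall>e\<in>N. fst e \<in> W \<and> snd e \<in> W"
    using pm_exists[of W n] ev unfolding W_def by auto
  have gN: "g \<notin> N" using N(4) unfolding W_def by auto
  have hN: "h \<notin> N" using N(4) unfolding W_def by auto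
  have "insert g (insert h N) \<in> perfect_matchings n"
    unfolding perfect_matchings_def
  proof (intro CollectI conjI ballI)
    show "insert g (insert h N) \<subseteq> pvars n" using assms N(1) by auto
  next
    fix k assume k: "k \<in> {1..2*n}"
    show "\<exists>!e. e \<in> insert g (insert h N) \<and> (fst e = k \<or> snd e = k)"
    proof (cases "k \<in> W")
      case True
      then obtain e where "e \<in> N" "cov e k" using N(2) by blast
      moreover have "\<not> cov g k" "\<not> cov h k" using True unfolding W_def cov_def by auto
      ultimately show ?thesis using N(3) True unfolding cov_def by blast
    next
      case False
      then have "k \<in> {fst g, snd g, fst h, snd h}" using k unfolding W_def by auto
      moreover have "\<not> cov e k" if "e \<in> N" for e using N(4) that False unfolding cov_def by auto
      ultimately show ?thesis using assms(3) unfolding cov_def by auto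
    qed
  qed
  then show ?thesis using gN hN by blast
qed

lemma pick_edge:
  assumes "finite X" "card X + 2 \<le> 2 * n"
  shows "\<exists>h\<in>pvars n. fst h \<notin> X \<and> snd h \<notin> X"
proof -
  define W where "W = {1..2*n} - X"
  have "card {1..2*n} - card X \<le> card W" unfolding W_def by (rule diff_card_le_card_Diff) fact
  then have cW: "card W \<ge> 2" using assms(2) by simp
  then have "W \<noteq> {}" by auto
  then obtain i where i: "i \<in> W" by blast
  have "card (W - {i}) \<ge> 1" using cW i by (simp add: W_def)
  then obtain j where j: "j \<in> W - {i}" by (metis card.empty ex_in_conv not_one_le_zero)
  show ?thesis
    using i j by (intro bexI[of _ "(min i j, max i j)"]) (auto simp: W_def pvars_def min_def max_def)
qed



definition cc :: "nat \<Rightarrow> ((nat \<times> nat) set \<Rightarrow> 'k::field) \<Rightarrow> (nat \<times> nat) set \<Rightarrow> nat \<times> nat \<Rightarrow> nat \<times> nat \<Rightarrow> 'k" where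
  "cc n a N g h = (if g \<noteq> h \<and> g \<notin> N \<and> h \<notin> N \<and> insert g (insert h N) \<in> perfect_matchings n
      then a (insert g (insert h N)) else 0)"

lemma cc_sym: "cc n a N g h = cc n a N h g"
  unfolding cc_def by (auto simp: insert_commute)

lemma sum_one_point:
  assumes "finite V" "g0 \<in> V" "\<forall>g\<in>V. g \<noteq> g0 \<longrightarrow> F g = 0"
  shows "(\<Sum>g\<in>V. F g) = F g0"
proof -
  have "(\<Sum>g\<in>V. F g) = F g0 + (\<Sum>g\<in>V - {g0}. F g)" using assms(1,2) by (rule sum.remove)
  also have "(\<Sum>g\<in>V - {g0}. F g) = 0" using assms(3) by (intro sum.neutral) auto
  finally show ?thesis by simp
qed

lemma finite_pvars: "finite (pvars n)"
proof -
  have "pvars n \<subseteq> {0..2*n} \<times> {0..2*n}" by (auto simp: pvars_def)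
  then show ?thesis using finite_subset by blast
qed

lemma pvars_lt: "e \<in> pvars n \<Longrightarrow> 1 \<le> fst e \<and> fst e < snd e \<and> snd e \<le> 2 * n"
  by (auto simp: pvars_def)

lemma PM_finite: "X \<in> perfect_matchings n \<Longrightarrow> finite X"
  using finite_pvars finite_subset unfolding perfect_matchings_def by blast

lemma cc_only:
  assumes X: "insert g0 (insert h N) \<in> perfect_matchings n" "g0 \<notin> N" "g0 \<noteq> h"
    and "g \<noteq> g0"
  shows "cc n a N g h = 0"
proof (rule ccontr)
  assume "cc n a N g h \<noteq> 0"
  then have "insert g (insert h N) \<in> perfect_matchings n" unfolding cc_def by (auto split: if_splits)
  then have "g0 = g" by (rule K1[OF X])
  with assms(4) show False by simp
qed

lemma cc_at:
  assumes X: "insert g0 (insert h N) \<in> perfect_matchings n" "g0 \<notin> N" "h \<notin> N" "g0 \<noteq> h"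
  shows "cc n a N g0 h = a (insert g0 (insert h N))"
  using assms unfolding cc_def by auto

lemma T_scalar:
  fixes a :: "(nat \<times> nat) set \<Rightarrow> 'k::field" and T :: "nat \<times> nat \<Rightarrow> nat \<times> nat \<Rightarrow> 'k"
  assumes n3: "n \<ge> 3" and anz: "\<forall>M\<in>perfect_matchings n. a M \<noteq> 0"
    and star: "\<And>N e h. finite N \<Longrightarrow> e \<in> pvars n \<Longrightarrow> h \<in> pvars n \<Longrightarrow>
        (\<Sum>g\<in>pvars n. T g e * cc n a N g h) = (\<Sum>g\<in>pvars n. T g h * cc n a N g e)"
  shows "\<forall>g\<in>pvars n. \<forall>e\<in>pvars n. g \<noteq> e \<longrightarrow> T g e = 0"
    and "\<forall>e\<in>pvars n. \<forall>h\<in>pvars n. T e e = T h h"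
proof -
  let ?V = "pvars n"
  show "\<forall>g\<in>?V. \<forall>e\<in>?V. g \<noteq> e \<longrightarrow> T g e = 0"
  proof (intro ballI impI)
    fix g0 e0 assume g0: "g0 \<in> ?V" and e0: "e0 \<in> ?V" and ne: "g0 \<noteq> e0"
    have rg: "1 \<le> fst g0 \<and> fst g0 < snd g0 \<and> snd g0 \<le> 2 * n" using pvars_lt[OF g0] .
    have re: "1 \<le> fst e0 \<and> fst e0 < snd e0 \<and> snd e0 \<le> 2 * n" using pvars_lt[OF e0] .
    obtain x where x: "cov e0 x" "\<not> cov g0 x"
    proof (cases "cov g0 (fst e0) \<and> cov g0 (snd e0)")
      case True
      then have "e0 = g0" using pair_eq re rg by blast
      then show ?thesis using ne by simp
    next
      case False
      then show ?thesis using that by (auto simp: cov_def)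
    qed
    have "card {fst g0, snd g0, x} \<le> 3" by (simp add: card_insert_if)
    then obtain h where h: "h \<in> ?V" "fst h \<notin> {fst g0, snd g0, x}" "snd h \<notin> {fst g0, snd g0, x}"
      using pick_edge[of "{fst g0, snd g0, x}" n] n3 by auto
    have disj: "{fst g0, snd g0} \<inter> {fst h, snd h} = {}" using h by auto
    have hx: "\<not> cov h x" using h by (auto simp: cov_def)
    have gh: "g0 \<noteq> h" using h by auto
    obtain N where N: "g0 \<notin> N" "h \<notin> N" and X: "insert g0 (insert h N) \<in> perfect_matchings n"
      using extend[OF g0 h(1) disj] by blast
    have fN: "finite N" using PM_finite[OF X] by auto
    have L: "(\<Sum>g\<in>?V. T g e0 * cc n a N g h) = T g0 e0 * a (insert g0 (insert h N))"
    proof -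
      have "(\<Sum>g\<in>?V. T g e0 * cc n a N g h) = T g0 e0 * cc n a N g0 h"
        using cc_only[OF X N(1) gh] by (intro sum_one_point finite_pvars g0) auto
      moreover have "cc n a N g0 h = a (insert g0 (insert h N))" by (rule cc_at[OF X N gh])
      ultimately show ?thesis by simp
    qed
    have R: "(\<Sum>g\<in>?V. T g h * cc n a N g e0) = 0"
    proof (intro sum.neutral ballI)
      fix g assume "g \<in> ?V"
      have "cc n a N g e0 = 0"
      proof (rule ccontr)
        assume "cc n a N g e0 \<noteq> 0"
        then have Y: "insert g (insert e0 N) \<in> perfect_matchings n" "e0 \<notin> N"
          unfolding cc_def by (auto split: if_splits)
        show False using K2[OF X Y x(1)] x(2) hx by auto
      qed
      then show "T g h * cc n a N g e0 = 0" by simp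
    qed
    have "T g0 e0 * a (insert g0 (insert h N)) = 0" using star[OF fN e0 h(1)] L R by simp
    moreover have "a (insert g0 (insert h N)) \<noteq> 0" using anz X by auto
    ultimately show "T g0 e0 = 0" by simp
  qed
  have disjcase: "T e e = T h h" if e: "e \<in> ?V" and h: "h \<in> ?V"
    and disj: "{fst e, snd e} \<inter> {fst h, snd h} = {}" for e h
  proof -
    have eh: "e \<noteq> h" using disj by auto
    obtain N where N: "e \<notin> N" "h \<notin> N" and X: "insert e (insert h N) \<in> perfect_matchings n"
      using extend[OF e h disj] by blast
    have X': "insert h (insert e N) \<in> perfect_matchings n" using X by (simp add: insert_commute)
    have fN: "finite N" using PM_finite[OF X] by auto
    have "(\<Sum>g\<in>?V. T g e * cc n a N g h) = T e e * cc n a N e h"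
      using cc_only[OF X N(1) eh] by (intro sum_one_point finite_pvars e) auto
    also have "cc n a N e h = a (insert e (insert h N))" by (rule cc_at[OF X N eh])
    finally have L: "(\<Sum>g\<in>?V. T g e * cc n a N g h) = T e e * a (insert e (insert h N))" .
    have "(\<Sum>g\<in>?V. T g h * cc n a N g e) = T h h * cc n a N h e"
      using cc_only[OF X' N(2) eh[symmetric]] by (intro sum_one_point finite_pvars h) auto
    also have "cc n a N h e = a (insert e (insert h N))"
      using cc_at[OF X' N(2) N(1) eh[symmetric]] by (simp add: insert_commute)
    finally have R: "(\<Sum>g\<in>?V. T g h * cc n a N g e) = T h h * a (insert e (insert h N))" .
    have "a (insert e (insert h N)) \<noteq> 0" using anz X by auto
    then show ?thesis using star[OF fN e h] L R by simp
  qed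
  show "\<forall>e\<in>?V. \<forall>h\<in>?V. T e e = T h h"
  proof (intro ballI)
    fix e h assume e: "e \<in> ?V" and h: "h \<in> ?V"
    have "card {fst e, snd e, fst h, snd h} \<le> 4" by (simp add: card_insert_if)
    then obtain h' where h': "h' \<in> ?V" "fst h' \<notin> {fst e, snd e, fst h, snd h}" "snd h' \<notin> {fst e, snd e, fst h, snd h}"
      using pick_edge[of "{fst e, snd e, fst h, snd h}" n] n3 by auto
    have "T e e = T h' h'" using disjcase[OF e h'(1)] h' by auto
    also have "\<dots> = T h h" using disjcase[OF h'(1) h] h' by auto
    finally show "T e e = T h h" .
  qed
qed



lemma quad_expand:
  assumes "finite V" "finite U" "finite W"
  shows "(\<Sum>g\<in>V. \<Sum>h\<in>V. (\<Sum>u\<in>U. X g u * Y u) * (\<Sum>w\<in>W. Z h w * Q w) * (c g h :: 'a::comm_ring_1))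
       = (\<Sum>u\<in>U. \<Sum>w\<in>W. Y u * Q w * (\<Sum>g\<in>V. \<Sum>h\<in>V. X g u * Z h w * c g h))"
proof -
  let ?F = "\<lambda>g h u w. Y u * Q w * (X g u * Z h w * c g h)"
  have "(\<Sum>g\<in>V. \<Sum>h\<in>V. (\<Sum>u\<in>U. X g u * Y u) * (\<Sum>w\<in>W. Z h w * Q w) * c g h)
      = (\<Sum>g\<in>V. \<Sum>h\<in>V. \<Sum>w\<in>W. \<Sum>u\<in>U. ?F g h u w)"
    by (simp add: sum_distrib_left sum_distrib_right mult_ac)
  also have "\<dots> = (\<Sum>g\<in>V. \<Sum>h\<in>V. \<Sum>u\<in>U. \<Sum>w\<in>W. ?F g h u w)"
    by (intro sum.cong refl sum.swap)
  also have "\<dots> = (\<Sum>g\<in>V. \<Sum>u\<in>U. \<Sum>h\<in>V. \<Sum>w\<in>W. ?F g h u w)"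
    by (intro sum.cong refl sum.swap)
  also have "\<dots> = (\<Sum>u\<in>U. \<Sum>g\<in>V. \<Sum>h\<in>V. \<Sum>w\<in>W. ?F g h u w)"
    by (rule sum.swap)
  also have "\<dots> = (\<Sum>u\<in>U. \<Sum>g\<in>V. \<Sum>w\<in>W. \<Sum>h\<in>V. ?F g h u w)"
    by (intro sum.cong refl sum.swap)
  also have "\<dots> = (\<Sum>u\<in>U. \<Sum>w\<in>W. \<Sum>g\<in>V. \<Sum>h\<in>V. ?F g h u w)"
    by (intro sum.cong refl sum.swap)
  also have "\<dots> = (\<Sum>u\<in>U. \<Sum>w\<in>W. Y u * Q w * (\<Sum>g\<in>V. \<Sum>h\<in>V. X g u * Z h w * c g h))"
    by (simp add: sum_distrib_left)
  finally show ?thesis .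
qed

lemma star_lemma:
  fixes A B :: "'v \<Rightarrow> 'v \<Rightarrow> 'k::field" and c :: "'v \<Rightarrow> 'v \<Rightarrow> 'k"
  assumes V: "finite V" and V1: "V1 \<subseteq> V"
    and AB: "\<forall>u\<in>V. \<forall>w\<in>V. (\<Sum>v\<in>V. A u v * B v w) = (if u = w then 1 else 0)"
    and csym: "\<And>g h. c g h = c h g"
    and H: "\<forall>u\<in>V1. \<forall>w\<in>V - V1. (\<Sum>e\<in>V. \<Sum>e'\<in>V. A e w * A e' u * c e e') = 0"
    and e: "e \<in> V" and h: "h \<in> V"
  shows "(\<Sum>g\<in>V. (\<Sum>u\<in>V1. A g u * B u e) * c g h) = (\<Sum>g\<in>V. (\<Sum>u\<in>V1. A g u * B u h) * c g e)"
proof -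
  define T where "T g e = (\<Sum>u\<in>V1. A g u * B u e)" for g e
  define R where "R g e = (\<Sum>w\<in>V - V1. A g w * B w e)" for g e
  have fV1: "finite V1" using V V1 finite_subset by blast
  have TR: "T g e + R g e = (if g = e then 1 else 0)" if "g \<in> V" "e \<in> V" for g e
  proof -
    have "(\<Sum>v\<in>V. A g v * B v e) = (\<Sum>v\<in>V - V1. A g v * B v e) + (\<Sum>v\<in>V1. A g v * B v e)"
      using V1 V by (rule sum.subset_diff)
    then show ?thesis using AB that unfolding T_def R_def by (simp add: add.commute)
  qed
  define Z where "Z e h = (\<Sum>g\<in>V. \<Sum>h'\<in>V. T g e * T h' h * c g h')" for e h
  have cross: "(\<Sum>g\<in>V. \<Sum>h'\<in>V. T g e * R h' h * c g h') = 0" for e h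
  proof -
    have "(\<Sum>g\<in>V. \<Sum>h'\<in>V. T g e * R h' h * c g h')
        = (\<Sum>u\<in>V1. \<Sum>w\<in>V - V1. B u e * B w h * (\<Sum>g\<in>V. \<Sum>h'\<in>V. A g u * A h' w * c g h'))"
      unfolding T_def R_def using V fV1 by (intro quad_expand) auto
    also have "\<dots> = 0"
    proof (intro sum.neutral ballI)
      fix u w assume u: "u \<in> V1" and w: "w \<in> V - V1"
      have "(\<Sum>g\<in>V. \<Sum>h'\<in>V. A g u * A h' w * c g h') = (\<Sum>h'\<in>V. \<Sum>g\<in>V. A h' w * A g u * c h' g)"
        by (subst sum.swap) (simp add: csym mult_ac)
      also have "\<dots> = 0" using H u w by simp
      finally show "B u e * B w h * (\<Sum>g\<in>V. \<Sum>h'\<in>V. A g u * A h' w * c g h') = 0" by simp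
    qed
    finally show ?thesis .
  qed
  have main: "(\<Sum>g\<in>V. T g e * c g h) = Z e h" if e: "e \<in> V" and h: "h \<in> V" for e h
  proof -
    have ch: "c g h = (\<Sum>h'\<in>V. (T h' h + R h' h) * c g h')" for g
    proof -
      have "(\<Sum>h'\<in>V. (T h' h + R h' h) * c g h') = (\<Sum>h'\<in>V. if h' = h then c g h' else 0)"
        using TR h by (intro sum.cong) auto
      also have "\<dots> = c g h" using V h by simp
      finally show ?thesis by simp
    qed
    have "(\<Sum>g\<in>V. T g e * c g h) = (\<Sum>g\<in>V. \<Sum>h'\<in>V. T g e * T h' h * c g h' + T g e * R h' h * c g h')"
      by (subst ch) (simp add: sum_distrib_left algebra_simps)
    also have "\<dots> = Z e h + (\<Sum>g\<in>V. \<Sum>h'\<in>V. T g e * R h' h * c g h')"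
      unfolding Z_def by (simp add: sum.distrib)
    finally show ?thesis using cross by simp
  qed
  have Zsym: "Z e h = Z h e" for e h
  proof -
    have "Z h e = (\<Sum>h'\<in>V. \<Sum>g\<in>V. T g h * T h' e * c g h')" unfolding Z_def by (rule sum.swap)
    also have "\<dots> = Z e h" unfolding Z_def by (simp add: csym mult_ac)
    finally show ?thesis by simp
  qed
  show ?thesis using main[OF e h] main[OF h e] Zsym unfolding T_def by simp
qed

lemma final_contra:
  fixes A B :: "'v \<Rightarrow> 'v \<Rightarrow> 'k::field"
  assumes V: "finite V" and V1: "V1 \<subseteq> V"
    and BA: "\<forall>u\<in>V. \<forall>w\<in>V. (\<Sum>v\<in>V. B u v * A v w) = (if u = w then 1 else 0)"
    and Tdiag: "\<forall>g\<in>V. \<forall>e\<in>V. g \<noteq> e \<longrightarrow> (\<Sum>u\<in>V1. A g u * B u e) = 0"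
    and Tconst: "\<forall>e\<in>V. \<forall>h\<in>V. (\<Sum>u\<in>V1. A e u * B u e) = (\<Sum>u\<in>V1. A h u * B u h)"
    and u0: "u0 \<in> V1" and w0: "w0 \<in> V - V1"
  shows False
proof -
  define T where "T g e = (\<Sum>u\<in>V1. A g u * B u e)" for g e
  define t where "t = T w0 w0"
  have fV1: "finite V1" using V V1 finite_subset by blast
  have key: "t * A g x = (if x \<in> V1 then A g x else 0)" if g: "g \<in> V" and x: "x \<in> V" for g x
  proof -
    have "(\<Sum>e\<in>V. T g e * A e x) = T g g * A g x"
      by (intro sum_one_point V g ballI impI) (simp add: T_def Tdiag g)
    also have "T g g = t" unfolding T_def t_def using Tconst g w0 by blast
    finally have 1: "(\<Sum>e\<in>V. T g e * A e x) = t * A g x" .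
    have "(\<Sum>e\<in>V. T g e * A e x) = (\<Sum>e\<in>V. \<Sum>u\<in>V1. A g u * (B u e * A e x))"
      unfolding T_def by (simp add: sum_distrib_left sum_distrib_right mult_ac)
    also have "\<dots> = (\<Sum>u\<in>V1. A g u * (\<Sum>e\<in>V. B u e * A e x))"
      by (subst sum.swap) (simp add: sum_distrib_left)
    also have "\<dots> = (\<Sum>u\<in>V1. if u = x then A g u else 0)"
      using BA x V1 by (intro sum.cong) auto
    also have "\<dots> = (if x \<in> V1 then A g x else 0)"
      using fV1 by (simp add: sum.delta')
    finally show ?thesis using 1 by simp
  qed
  have nz: "\<exists>g\<in>V. A g x \<noteq> 0" if "x \<in> V" for x
  proof (rule ccontr)
    assume "\<not> ?thesis"
    then have "(\<Sum>v\<in>V. B x v * A v x) = 0" by simp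
    then show False using BA that by simp
  qed
  obtain g1 where g1: "g1 \<in> V" "A g1 u0 \<noteq> 0" using nz u0 V1 by blast
  obtain g2 where g2: "g2 \<in> V" "A g2 w0 \<noteq> 0" using nz w0 by blast
  have "t = 1" using key[OF g1(1), of u0] g1(2) u0 V1 by auto
  moreover have "t = 0" using key[OF g2(1), of w0] g2(2) w0 by auto
  ultimately show False by simp
qed



lemma keys_empty_zero: "Poly_Mapping.keys m = {} \<Longrightarrow> m = 0"
proof (rule poly_mapping_eqI)
  fix k assume "Poly_Mapping.keys m = {}"
  then have "k \<notin> Poly_Mapping.keys m" by simp
  then show "Poly_Mapping.lookup m k = Poly_Mapping.lookup 0 k" by (simp add: in_keys_iff)
qed

lemma subst_zero_map: "subst (\<lambda>_. 0) p = mconst_mono (Poly_Mapping.lookup p 0) 0"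
proof -
  have mz: "monev (\<lambda>_. 0) m = (if m = 0 then 1 else (0 :: ('a, 'b::comm_ring_1) mpoly))" for m :: "'a \<Rightarrow>\<^sub>0 nat"
  proof (cases "m = 0")
    case False
    have "Poly_Mapping.keys m \<noteq> {}"
    proof
      assume "Poly_Mapping.keys m = {}"
      then have "m = 0" by (rule keys_empty_zero)
      with False show False by simp
    qed
    then obtain v where v: "v \<in> Poly_Mapping.keys m" by blast
    then have "(\<lambda>_. 0 :: ('a, 'b) mpoly) v ^ Poly_Mapping.lookup m v = 0"
      by (simp add: in_keys_iff power_0_left)
    then have "monev (\<lambda>_. 0 :: ('a, 'b) mpoly) m = 0"
      unfolding monev_def using v by (intro prod_zero) auto
    then show ?thesis using False by simp
  qed simp
  have "subst (\<lambda>_. 0) p = (\<Sum>m\<in>Poly_Mapping.keys p. if m = 0 then mconst_mono (Poly_Mapping.lookup p m) 0 else 0)"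
    unfolding subst_def monev_def[symmetric] mz by (intro sum.cong) auto
  also have "\<dots> = mconst_mono (Poly_Mapping.lookup p 0) 0"
    by (simp add: sum.delta in_keys_iff)
  finally show ?thesis .
qed

lemma gform: "subst \<sigma> (\<Sum>M\<in>P. mconst_mono (a M) 0 * matching_monomial M) = (\<Sum>M\<in>P. mconst_mono (a M) 0 * (\<Prod>e\<in>M. \<sigma> e))"
  by (simp add: subst_sum subst_mult subst_mm)

lemma const0:
  assumes "\<forall>M\<in>P. M \<noteq> {} \<and> finite M"
  shows "Poly_Mapping.lookup (subst (lin_subst V A) (\<Sum>M\<in>P. mconst_mono (a M) 0 * matching_monomial M)) 0 = (0::'k::field)"
proof -
  let ?z = "\<lambda>_. 0 :: (nat \<times> nat, 'k) mpoly"
  have z: "subst ?z (lin_subst V A e) = 0" for e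
    by (simp add: lin_subst_def subst_sum subst_mult)
  have "subst ?z (\<Prod>e\<in>M. lin_subst V A e) = 0" if "M \<in> P" for M
  proof -
    have "finite M" "M \<noteq> {}" using assms that by auto
    then have "(\<Prod>e\<in>M. subst ?z (lin_subst V A e)) = 0"
      by (intro prod_zero) (auto simp: z)
    then show ?thesis by (simp only: subst_prod)
  qed
  then have "subst ?z (subst (lin_subst V A) (\<Sum>M\<in>P. mconst_mono (a M) 0 * matching_monomial M)) = 0"
    unfolding gform subst_sum subst_mult by (intro sum.neutral) simp
  then have "mconst_mono (Poly_Mapping.lookup (subst (lin_subst V A) (\<Sum>M\<in>P. mconst_mono (a M) 0 * matching_monomial M)) 0) 0 = (0 :: (nat \<times> nat, 'k) mpoly)"
    by (simp add: subst_zero_map)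
  then have "Poly_Mapping.lookup (mconst_mono (Poly_Mapping.lookup (subst (lin_subst V A) (\<Sum>M\<in>P. mconst_mono (a M) 0 * matching_monomial M)) 0) 0 :: (nat \<times> nat, 'k) mpoly) 0 = 0"
    by simp
  then show ?thesis by (simp add: C_def)
qed

lemma g_back:
  assumes V: "finite V" and PV: "\<forall>M\<in>P. M \<subseteq> V"
    and AB: "\<forall>u\<in>V. \<forall>w\<in>V. (\<Sum>v\<in>V. A u v * B v w) = (if u = w then 1 else 0)"
  shows "subst (lin_subst V B) (subst (lin_subst V A) (\<Sum>M\<in>P. mconst_mono (a M) 0 * matching_monomial M))
     = (\<Sum>M\<in>P. mconst_mono (a M) 0 * matching_monomial M :: (nat \<times> nat, 'k::field) mpoly)"
proof -
  have pm: "subst (lin_subst V B) (\<Prod>e\<in>M. lin_subst V A e) = matching_monomial M" if "M \<in> P" for M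
  proof -
    have "subst (lin_subst V B) (\<Prod>e\<in>M. lin_subst V A e) = (\<Prod>e\<in>M. subst (lin_subst V B) (lin_subst V A e))"
      by (rule subst_prod)
    also have "\<dots> = (\<Prod>e\<in>M. mvar e)"
    proof (rule prod.cong[OF refl])
      fix e assume "e \<in> M"
      then have "e \<in> V" using PV that by blast
      then show "subst (lin_subst V B) (lin_subst V A e) = mvar e" by (rule lin_subst_subst[OF V _ AB])
    qed
    finally show ?thesis unfolding matching_monomial_def .
  qed
  have "subst (lin_subst V B) (subst (lin_subst V A) (\<Sum>M\<in>P. mconst_mono (a M) 0 * matching_monomial M))
     = (\<Sum>M\<in>P. mconst_mono (a M) 0 * subst (lin_subst V B) (\<Prod>e\<in>M. lin_subst V A e))"
    unfolding gform subst_sum subst_mult subst_C ..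
  also have "\<dots> = (\<Sum>M\<in>P. mconst_mono (a M) 0 * matching_monomial M)"
    by (rule sum.cong[OF refl]) (simp add: pm)
  finally show ?thesis .
qed

lemma F_nonzero:
  assumes "M0 \<in> P" "a M0 \<noteq> 0" "finite P" "\<forall>M\<in>P. finite M"
  shows "(\<Sum>M\<in>P. mconst_mono (a M) 0 * matching_monomial M :: (nat \<times> nat, 'k::field) mpoly) \<noteq> 0"
proof -
  have "Poly_Mapping.lookup (\<Sum>M\<in>P. mconst_mono (a M) 0 * matching_monomial M :: (nat \<times> nat, 'k) mpoly) (mon M0)
      = (\<Sum>M\<in>P. if M = M0 then a M else 0)"
    unfolding lookup_sum
  proof (intro sum.cong refl)
    fix M assume "M \<in> P"
    then have fM: "finite M" "finite M0" using assms by auto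
    have "Poly_Mapping.lookup (mconst_mono (a M) 0 * matching_monomial M :: (nat \<times> nat, 'k) mpoly) (mon M0)
        = (if mon M = mon M0 then a M else 0)"
      using fM by (simp add: mm_single C_single lookup_single when_def)
    also have "\<dots> = (if M = M0 then a M else 0)" using mon_inj[OF fM] by auto
    finally show "Poly_Mapping.lookup (mconst_mono (a M) 0 * matching_monomial M :: (nat \<times> nat, 'k) mpoly) (mon M0)
        = (if M = M0 then a M else 0)" .
  qed
  also have "\<dots> = a M0" using assms by simp
  finally show ?thesis using assms(2) by auto
qed

lemma mdeg_zero: "mdeg m = 0 \<Longrightarrow> m = 0"
proof -
  assume "mdeg m = 0"
  then have "\<forall>v\<in>Poly_Mapping.keys m. Poly_Mapping.lookup m v = 0" unfolding mdeg_def by simp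
  then have "Poly_Mapping.lookup m v = 0" for v by (cases "v \<in> Poly_Mapping.keys m") (auto simp: in_keys_iff)
  then show ?thesis by (intro poly_mapping_eqI) simp
qed

lemma form_contra:
  fixes g p q :: "('v, 'k::field) mpoly"
  assumes "g \<noteq> 0" "Poly_Mapping.lookup g 0 = 0" "g = p + q" "vars p = {}" "p \<noteq> 0" "is_form q"
  shows False
proof -
  have kp: "m = 0" if "m \<in> Poly_Mapping.keys p" for m
  proof -
    have "x \<notin> Poly_Mapping.keys m" for x using assms(4) that unfolding vars_def by auto
    then show ?thesis by (intro poly_mapping_eqI) (simp add: in_keys_iff)
  qed
  have p0: "Poly_Mapping.lookup p 0 \<noteq> 0"
  proof
    assume "Poly_Mapping.lookup p 0 = 0"
    then have "Poly_Mapping.lookup p m = 0" for m using kp[of m] by (cases "m = 0") (auto simp: in_keys_iff)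
    then have "p = 0" by (intro poly_mapping_eqI) simp
    then show False using assms(5) by simp
  qed
  have "Poly_Mapping.keys g \<noteq> {}"
  proof
    assume "Poly_Mapping.keys g = {}"
    then have "g = 0" by (rule keys_empty_zero)
    with assms(1) show False by simp
  qed
  then obtain m0 where "m0 \<in> Poly_Mapping.keys g" by blast
  then have m0: "Poly_Mapping.lookup g m0 \<noteq> 0" by (simp add: in_keys_iff)
  have m00: "m0 \<noteq> 0" using m0 assms(2) by auto
  have "Poly_Mapping.lookup p m0 = 0" using kp m00 by (auto simp: in_keys_iff)
  then have q1: "m0 \<in> Poly_Mapping.keys q" using m0 assms(3) by (simp add: lookup_add in_keys_iff)
  have "Poly_Mapping.lookup q 0 = - Poly_Mapping.lookup p 0" using assms(2,3)
    by (simp add: lookup_add eq_neg_iff_add_eq_0 add.commute)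
  then have q2: "0 \<in> Poly_Mapping.keys q" using p0 by (simp add: in_keys_iff)
  obtain d where "\<forall>m\<in>Poly_Mapping.keys q. mdeg m = d" using assms(6) unfolding is_form_def by blast
  then have "mdeg m0 = mdeg (0 :: 'v \<Rightarrow>\<^sub>0 nat)" using q1 q2 by auto
  then have "mdeg m0 = 0" by (simp add: mdeg_def)
  then show False using mdeg_zero m00 by blast
qed

lemma H_lemma:
  fixes a :: "(nat \<times> nat) set \<Rightarrow> 'k::field"
  assumes V: "finite V" and P: "finite P" and PV: "\<forall>M\<in>P. M \<subseteq> V" and uV: "u \<in> V" and wV: "w \<in> V"
    and AB: "\<forall>u\<in>V. \<forall>w\<in>V. (\<Sum>v\<in>V. A u v * B v w) = (if u = w then 1 else 0)"
    and D0: "deriv u (deriv w (subst (lin_subst V A) (\<Sum>M\<in>P. mconst_mono (a M) 0 * matching_monomial M))) = 0"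
    and N: "finite N"
  shows "(\<Sum>e\<in>V. \<Sum>e'\<in>V. A e w * A e' u * (if e \<noteq> e' \<and> e \<notin> N \<and> e' \<notin> N \<and> insert e (insert e' N) \<in> P
              then a (insert e (insert e' N)) else 0)) = 0"
proof -
  have Y0: "(\<Sum>M\<in>P. \<Sum>e\<in>M. \<Sum>e'\<in>M - {e}.
            Poly_Mapping.single (mon (M - {e} - {e'})) (a M * A e w * A e' u)) = 0"
    using Y_formula[OF V PV uV wV AB, of a] D0 by simp
  have "Poly_Mapping.lookup (\<Sum>M\<in>P. \<Sum>e\<in>M. \<Sum>e'\<in>M - {e}.
            Poly_Mapping.single (mon (M - {e} - {e'})) (a M * A e w * A e' u)) (mon N)
      = (\<Sum>M\<in>P. \<Sum>e\<in>M. \<Sum>e'\<in>M - {e}. (if M - {e} - {e'} = N then a M * A e w * A e' u else 0))"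
    unfolding lookup_sum
  proof (intro sum.cong refl)
    fix M e e' assume "M \<in> P"
    then have fM: "finite (M - {e} - {e'})" using PV V finite_subset by blast
    show "Poly_Mapping.lookup (Poly_Mapping.single (mon (M - {e} - {e'})) (a M * A e w * A e' u)) (mon N)
       = (if M - {e} - {e'} = N then a M * A e w * A e' u else 0)"
      using mon_inj[OF fM N] by (auto simp: lookup_single when_def)
  qed
  also have "\<dots> = (\<Sum>e\<in>V. \<Sum>e'\<in>V. (if e \<noteq> e' \<and> e \<notin> N \<and> e' \<notin> N \<and> insert e (insert e' N) \<in> P
              then a (insert e (insert e' N)) * A e w * A e' u else 0))"
    by (rule reindex3[OF P V PV])
  also have "\<dots> = (\<Sum>e\<in>V. \<Sum>e'\<in>V. A e w * A e' u * (if e \<noteq> e' \<and> e \<notin> N \<and> e' \<notin> N \<and> insert e (insert e' N) \<in> P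
              then a (insert e (insert e' N)) else 0))"
    by (intro sum.cong refl) auto
  finally show ?thesis using Y0 by simp
qed

lemma PM_nonempty: "\<exists>M. M \<in> perfect_matchings n"
proof -
  have "even (card {1..2*n})" by simp
  then obtain N where N: "N \<subseteq> pvars n" "\<forall>k\<in>{1..2*n}. \<exists>e\<in>N. cov e k"
      "\<forall>k\<in>{1..2*n}. \<forall>e1\<in>N. \<forall>e2\<in>N. cov e1 k \<longrightarrow> cov e2 k \<longrightarrow> e1 = e2"
    using pm_exists[of "{1..2*n}" n] by auto
  have "N \<in> perfect_matchings n"
    unfolding perfect_matchings_def
  proof (intro CollectI conjI ballI)
    fix k assume k: "k \<in> {1..2*n}"
    show "\<exists>!e. e \<in> N \<and> (fst e = k \<or> snd e = k)"
      using N(2,3) k unfolding cov_def by blast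
  qed (use N in auto)
  then show ?thesis by blast
qed



theorem corollary5p8:
  fixes n :: nat and a :: "(nat \<times> nat) set \<Rightarrow> 'k::field"
  assumes "n \<ge> 3"
    and "card (UNIV :: 'k set) \<noteq> 2"
    and "\<forall>M\<in>perfect_matchings n. a M \<noteq> 0"
  shows "\<not> direct_sum (pvars n)
           (\<Sum>M\<in>perfect_matchings n. mconst_mono (a M) 0 * matching_monomial M)"
proof
  let ?V = "pvars n" and ?P = "perfect_matchings n"
  note n3 = assms(1) and anz = assms(3)
  define F where "F = (\<Sum>M\<in>?P. mconst_mono (a M) 0 * matching_monomial M :: (nat \<times> nat, 'k) mpoly)"
  assume "direct_sum ?V (\<Sum>M\<in>?P. mconst_mono (a M) 0 * matching_monomial M)"
  then obtain A f1 f2 V1 V2 where inv: "invertible_on ?V A"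
    and g12: "subst (lin_subst ?V A) F = f1 + f2"
    and forms: "is_form f1" "is_form f2" "f1 \<noteq> 0" "f2 \<noteq> 0"
    and sub: "V1 \<subseteq> ?V" "V2 \<subseteq> ?V" "V1 \<inter> V2 = {}" "vars f1 \<subseteq> V1" "vars f2 \<subseteq> V2"
    unfolding direct_sum_def F_def by blast
  from inv obtain B where
    AB: "\<forall>u\<in>?V. \<forall>w\<in>?V. (\<Sum>v\<in>?V. A u v * B v w) = (if u = w then 1 else 0)" and
    BA: "\<forall>u\<in>?V. \<forall>w\<in>?V. (\<Sum>v\<in>?V. B u v * A v w) = (if u = w then 1 else 0)"
    unfolding invertible_on_def by blast
  have finV: "finite ?V" by (rule finite_pvars)
  have PV: "\<forall>M\<in>?P. M \<subseteq> ?V" by (simp add: perfect_matchings_def)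
  have finP: "finite ?P"
  proof -
    have "?P \<subseteq> Pow ?V" using PV by auto
    then show ?thesis using finV finite_subset by blast
  qed
  have PMfin: "\<forall>M\<in>?P. finite M" using PV finV finite_subset by blast
  define g where "g = subst (lin_subst ?V A) F"
  obtain M0 where M0: "M0 \<in> ?P" using PM_nonempty by blast
  have Fnz: "F \<noteq> 0" unfolding F_def using F_nonzero[OF M0 _ finP PMfin] M0 anz by blast
  have gnz: "g \<noteq> 0"
  proof
    assume "g = 0"
    then have "subst (lin_subst ?V B) g = 0" by simp
    moreover have "subst (lin_subst ?V B) g = F" unfolding g_def F_def by (rule g_back[OF finV PV AB])
    ultimately show False using Fnz by simp
  qed
  have ne: "\<forall>M\<in>?P. M \<noteq> {} \<and> finite M"
  proof
    fix M assume M: "M \<in> ?P"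
    have "\<exists>e\<in>M. cov e 1" using PM_exists[OF M, of 1] n3 by auto
    then show "M \<noteq> {} \<and> finite M" using PMfin M by auto
  qed
  have g0: "Poly_Mapping.lookup g 0 = 0" unfolding g_def F_def by (rule const0[OF ne])
  have g12': "g = f1 + f2" using g12 unfolding g_def .
  have v1: "vars f1 \<noteq> {}"
  proof
    assume "vars f1 = {}"
    then show False using form_contra[OF gnz g0 g12' _ forms(3) forms(2)] by blast
  qed
  have v2: "vars f2 \<noteq> {}"
  proof
    assume "vars f2 = {}"
    moreover have "g = f2 + f1" using g12' by (simp add: add.commute)
    ultimately show False using form_contra[OF gnz g0 _ _ forms(4) forms(1)] by blast
  qed
  define V1' where "V1' = ?V \<inter> V1"
  have V1'V: "V1' \<subseteq> ?V" unfolding V1'_def by auto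
  obtain u0 where u0: "u0 \<in> vars f1" using v1 by blast
  then have u0': "u0 \<in> V1'" using sub unfolding V1'_def by auto
  obtain w0 where w0: "w0 \<in> vars f2" using v2 by blast
  then have w0': "w0 \<in> ?V - V1'" using sub unfolding V1'_def by auto
  have D0: "deriv u (deriv w g) = 0" if u: "u \<in> V1'" and w: "w \<in> ?V - V1'" for u w
  proof -
    have "w \<notin> vars f1" using w sub unfolding V1'_def by auto
    then have "deriv w f1 = 0" by (rule deriv_notvar)
    then have "deriv w g = deriv w f2" using g12' by (simp add: deriv_add)
    moreover have "u \<notin> vars (deriv w f2)" using vars_deriv[of w f2] sub u unfolding V1'_def by auto
    ultimately show ?thesis by (simp add: deriv_notvar)
  qed
  have H: "\<forall>u\<in>V1'. \<forall>w\<in>?V - V1'. (\<Sum>e\<in>?V. \<Sum>e'\<in>?V. A e w * A e' u * cc n a N e e') = 0"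
    if N: "finite N" for N
  proof (intro ballI)
    fix u w assume u: "u \<in> V1'" and w: "w \<in> ?V - V1'"
    have uV: "u \<in> ?V" and wV: "w \<in> ?V" using u w V1'V by auto
    show "(\<Sum>e\<in>?V. \<Sum>e'\<in>?V. A e w * A e' u * cc n a N e e') = 0"
      unfolding cc_def using H_lemma[OF finV finP PV uV wV AB _ N, of a] D0[OF u w]
      unfolding g_def F_def by blast
  qed
  have star: "(\<Sum>g\<in>?V. (\<Sum>u\<in>V1'. A g u * B u e) * cc n a N g h) = (\<Sum>g\<in>?V. (\<Sum>u\<in>V1'. A g u * B u h) * cc n a N g e)"
    if "finite N" "e \<in> ?V" "h \<in> ?V" for N e h
    by (rule star_lemma[OF finV V1'V AB cc_sym H[OF that(1)] that(2,3)])
  note TS = T_scalar[where T = "\<lambda>g e. \<Sum>u\<in>V1'. A g u * B u e", OF n3 anz]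
  have Tdiag: "\<forall>g\<in>?V. \<forall>e\<in>?V. g \<noteq> e \<longrightarrow> (\<Sum>u\<in>V1'. A g u * B u e) = 0"
    using TS(1) star by blast
  have Tconst: "\<forall>e\<in>?V. \<forall>h\<in>?V. (\<Sum>u\<in>V1'. A e u * B u e) = (\<Sum>u\<in>V1'. A h u * B u h)"
    using TS(2) star by blast
  show False by (rule final_contra[OF finV V1'V BA Tdiag Tconst u0' w0'])
qed


end
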